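(* Let $\mathcal X$ be finite with $N=|\mathcal X|\ge2$, $c\in(0,1/N]$, $\varepsilon\ge 0$, $l\in\{1,\dots,N-1\}$, and let $K$ be a kernel from $\mathcal X$ to a finite set $\mathcal Y$ with $C(K,\mathcal Q_{\mathcal X}(c))\le\varepsilon$. If $\varepsilon<-\log\big((N-l)c\big)$, then for every $y\in\mathcal Y$ such that $K_{Y|X=x}(y)>0$ for some $x$, the number of $x\in\mathcal X$ with $K_{Y|X=x}(y)=0$ is at most $l-1$.
   Context: A kernel $K$ is a row-stochastic matrix with entries $K_{Y|X=x}(y)$; $(K\circ P_X)(y)=\sum_x K_{Y|X=x}(y)P_X(x)$. For full-support $P_X$ and $(K\circ P_X)(y)>0$, $\ell_{K\times P_X}(X\to y)=\log\frac{\max_{x}K_{Y|X=x}(y)}{(K\circ P_X)(y)}$ (natural log). $\mathcal Q_{\mathcal X}(c)=\{P_X\in\mathcal P(\mathcal X):\min_x P_X(x)\ge c\}$, and $C(K,\mathcal P)=\sup_{P_X\in\mathcal P}\sup_{y:(K\circ P_X)(y)>0}\ell_{K\times P_X}(X\to y)$. *)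

theory Defs
  imports "HOL-Analysis.Analysis"
begin

text \<open>A kernel from a finite type 'x to a finite type 'y: K x y = K_{Y|X=x}(y), row-stochastic.\<close>
definition is_kernel :: "('x::finite \<Rightarrow> 'y::finite \<Rightarrow> real) \<Rightarrow> bool" where
  "is_kernel K \<longleftrightarrow> (\<forall>x y. 0 \<le> K x y) \<and> (\<forall>x. (\<Sum>y\<in>UNIV. K x y) = 1)"

definition is_dist :: "('x::finite \<Rightarrow> real) \<Rightarrow> bool" where
  "is_dist P \<longleftrightarrow> (\<forall>x. 0 \<le> P x) \<and> (\<Sum>x\<in>UNIV. P x) = 1"

definition push :: "('x::finite \<Rightarrow> 'y \<Rightarrow> real) \<Rightarrow> ('x \<Rightarrow> real) \<Rightarrow> 'y \<Rightarrow> real" where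
  "push K P y = (\<Sum>x\<in>UNIV. K x y * P x)"

definition leak :: "('x::finite \<Rightarrow> 'y \<Rightarrow> real) \<Rightarrow> ('x \<Rightarrow> real) \<Rightarrow> 'y \<Rightarrow> real" where
  "leak K P y = ln (Max (range (\<lambda>x. K x y)) / push K P y)"

definition Qset :: "real \<Rightarrow> ('x::finite \<Rightarrow> real) set" where
  "Qset c = {P. is_dist P \<and> Min (range P) \<ge> c}"

definition cap :: "('x::finite \<Rightarrow> 'y \<Rightarrow> real) \<Rightarrow> ('x \<Rightarrow> real) set \<Rightarrow> ereal" where
  "cap K PP = (SUP Py \<in> {(P, y). P \<in> PP \<and> push K P y > 0}. ereal (leak K (fst Py) (snd Py)))"

end

theory Submission
  imports Defs
begin

theorem lemma1:
  fixes K :: "'x::finite \<Rightarrow> 'y::finite \<Rightarrow> real"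
    and c \<epsilon> :: real and l :: nat
  assumes "CARD('x) \<ge> 2"
    and "0 < c" and "c \<le> 1 / real CARD('x)"
    and "0 \<le> \<epsilon>"
    and "1 \<le> l" and "l \<le> CARD('x) - 1"
    and "is_kernel K"
    and "cap K (Qset c) \<le> ereal \<epsilon>"
    and "\<epsilon> < - ln (real (CARD('x) - l) * c)"
  shows "\<forall>y. (\<exists>x. K x y > 0) \<longrightarrow> card {x. K x y = 0} \<le> l - 1"
proof (intro allI impI, rule ccontr)
  fix y assume ex: "\<exists>x. K x y > 0" and nle: "\<not> card {x. K x y = 0} \<le> l - 1"
  define Z where "Z = {x. K x y = 0}"
  define N where "N = CARD('x)"
  define n where "n = card Z"
  have nl: "l \<le> n" using nle assms(5) unfolding n_def Z_def by linarith
  have nN: "n \<le> N" unfolding n_def N_def by (simp add: card_mono)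
  have cardc: "card (- Z) = N - n" unfolding n_def N_def by (simp add: Compl_eq_Diff_UNIV card_Diff_subset)
  have Nc: "real N * c \<le> 1" using assms(2,3) assms(1) unfolding N_def by (simp add: field_simps)
  define a where "a = (1 - real (N - n) * c) / real n"
  define P where "P = (\<lambda>x. if x \<in> Z then a else c)"
  have npos: "real n > 0" using nl assms(5) by simp
  have ac: "a \<ge> c"
  proof -
    have "real (N - n) = real N - real n" using nN by simp
    hence "1 - real (N - n) * c \<ge> real n * c" using Nc by (simp add: algebra_simps)
    thus ?thesis unfolding a_def using npos by (simp add: field_simps)
  qed
  have Pge: "\<And>x. P x \<ge> c" unfolding P_def using ac by auto
  have sumP: "(\<Sum>x\<in>UNIV. P x) = 1"
  proof -
    have "(\<Sum>x\<in>UNIV. P x) = (\<Sum>x\<in>Z. P x) + (\<Sum>x\<in>-Z. P x)"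
      using sum.union_disjoint[of Z "-Z"] by (simp add: Compl_partition)
    also have "\<dots> = real n * a + real (N - n) * c"
      unfolding P_def using cardc n_def by simp
    also have "\<dots> = 1" unfolding a_def using npos by simp
    finally show ?thesis .
  qed
  have PQ: "P \<in> Qset c"
    unfolding Qset_def is_dist_def using Pge sumP assms(2)
    by (auto intro: order_trans[OF less_imp_le[OF assms(2)]] simp: Min_ge_iff)
  define M where "M = Max (range (\<lambda>x. K x y))"
  have KM: "\<And>x. K x y \<le> M" unfolding M_def by simp
  obtain x0 where x0: "K x0 y > 0" using ex by blast
  have Mpos: "M > 0" using KM[of x0] x0 by linarith
  have Kge: "\<And>x. K x y \<ge> 0" using assms(7) unfolding is_kernel_def by blast
  have pushEq: "push K P y = c * (\<Sum>x\<in>-Z. K x y)"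
  proof -
    have "push K P y = (\<Sum>x\<in>Z. K x y * P x) + (\<Sum>x\<in>-Z. K x y * P x)"
      unfolding push_def
      using sum.union_disjoint[of Z "-Z"] by (simp add: Compl_partition)
    also have "\<dots> = (\<Sum>x\<in>-Z. K x y * c)" unfolding P_def Z_def by simp
    finally show ?thesis by (simp add: sum_distrib_left mult.commute)
  qed
  have x0Z: "x0 \<in> -Z" using x0 unfolding Z_def by simp
  have spos: "(\<Sum>x\<in>-Z. K x y) > 0"
    using sum_pos2[of "-Z" x0 "\<lambda>x. K x y"] x0Z x0 Kge by simp
  have pushpos: "push K P y > 0" using pushEq spos assms(2) by simp
  have "(\<Sum>x\<in>-Z. K x y) \<le> real (card (-Z)) * M"
    using sum_bounded_above[of "-Z" "\<lambda>x. K x y" M] KM by simp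
  also have "\<dots> \<le> real (N - l) * M" using cardc nl Mpos by simp
  finally have sb: "(\<Sum>x\<in>-Z. K x y) \<le> real (N - l) * M" .
  have Nl: "real (N - l) > 0" using assms(6) assms(1) unfolding N_def by simp
  have pushle: "push K P y \<le> real (N - l) * c * M"
    using pushEq sb assms(2) by (simp add: mult_left_mono mult.assoc mult.left_commute)
  have "leak K P y = ln (M / push K P y)" unfolding leak_def M_def by simp
  also have "\<dots> \<ge> ln (1 / (real (N - l) * c))"
  proof -
    have "1 / (real (N - l) * c) \<le> M / push K P y"
      using pushle pushpos Nl assms(2) Mpos by (simp add: field_simps)
    thus ?thesis using Nl assms(2) Mpos pushpos by (subst ln_le_cancel_iff) auto
  qed
  finally have lk: "leak K P y \<ge> - ln (real (N - l) * c)"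
    using Nl assms(2) by (simp add: ln_div)
  have "ereal (leak K P y) \<le> cap K (Qset c)"
    unfolding cap_def
    by (rule SUP_upper2[of "(P, y)"]) (use PQ pushpos in auto)
  hence "leak K P y \<le> \<epsilon>" using assms(8) by (metis ereal_less_eq(3) order_trans)
  thus False using lk assms(9) unfolding N_def by linarith
qed

end
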